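(* Let $\mathcal D_{\mathrm{cost}}$ be a distribution on $\mathbb R_{\ge0}$ with mean $1$, let $n\ge1$, and let $x_1,\dots,x_n$ be i.i.d. from $\mathcal D_{\mathrm{cost}}$. Let $\Delta(x_1,\dots,x_n)$ be the minimum number of the $x_i$ that must be removed so that the sum of the remaining ones is at most $n$. Then for every $v>0$, $$\Pr[\Delta(x_1,\dots,x_n)\ge v]\le\frac2v+\frac{4n}{v^2}.$$ *)

theory Defs
  imports "HOL-Probability.Probability"
begin

definition Delta :: "nat \<Rightarrow> (nat \<Rightarrow> real) \<Rightarrow> nat" where
  "Delta n x = Min {card S | S. S \<subseteq> {..<n} \<and> (\<Sum>i\<in>{..<n} - S. x i) \<le> real n}"

end

theory Submission
  imports Defs
begin

lemma cheb:
  fixes D :: "real measure" and n :: nat and t d :: real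
  assumes pD: "prob_space D"
    and sD: "sets D = sets borel"
    and nn: "AE x in D. x \<ge> 0"
    and intD: "integrable D (\<lambda>x. x)"
    and m1: "(\<integral>x. x \<partial>D) = 1"
    and t: "t > 0" and d: "d > 0"
  shows "measure (PiM {..<n} (\<lambda>_. D))
           {x \<in> space (PiM {..<n} (\<lambda>_. D)). real n + d \<le> (\<Sum>i<n. min (x i) t)}
         \<le> real n * t / d\<^sup>2"
proof -
  interpret D: prob_space D by (rule pD)
  interpret P: product_prob_space "\<lambda>_::nat. D" "{..<n}" by unfold_locales
  let ?M = "PiM {..<n} (\<lambda>_::nat. D)"
  define f where "f y = max 0 (min y t)" for y :: real
  have fmeas[measurable]: "f \<in> borel_measurable D"
    unfolding f_def using sD by (simp add: measurable_cong_sets[OF sD refl])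
  have f01: "0 \<le> f y" "f y \<le> t" for y using t by (auto simp: f_def)
  have fint: "integrable D f"
    by (rule D.integrable_const_bound[where B=t]) (use f01 in auto)
  define \<mu> where "\<mu> = (\<integral>y. f y \<partial>D)"
  have mu0: "0 \<le> \<mu>" unfolding \<mu>_def using f01 by simp
  have mu1: "\<mu> \<le> 1"
  proof -
    have "\<mu> \<le> (\<integral>x. x \<partial>D)" unfolding \<mu>_def
      by (rule integral_mono_AE[OF fint intD]) (use nn in \<open>auto simp: f_def\<close>)
    then show ?thesis using m1 by simp
  qed
  have f2int: "integrable D (\<lambda>y. (f y)\<^sup>2)"
    by (rule D.integrable_const_bound[where B="t\<^sup>2"]) (use f01 t in \<open>auto simp: abs_le_iff power_mono\<close>)
  have f2le: "(\<integral>y. (f y)\<^sup>2 \<partial>D) \<le> t * \<mu>"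
  proof -
    have "(\<integral>y. (f y)\<^sup>2 \<partial>D) \<le> (\<integral>y. t * f y \<partial>D)"
      by (rule integral_mono[OF f2int]) (use fint f01 in \<open>auto simp: power2_eq_square intro: mult_right_mono\<close>)
    then show ?thesis unfolding \<mu>_def by simp
  qed
  define g where "g y = f y - \<mu>" for y
  have gmeas[measurable]: "g \<in> borel_measurable D" unfolding g_def by measurable
  have gbd: "\<bar>g y\<bar> \<le> t + \<mu>" for y using f01[of y] mu0 unfolding g_def by auto
  have gint: "integrable D g" unfolding g_def using fint by auto
  have g0: "(\<integral>y. g y \<partial>D) = 0" unfolding g_def \<mu>_def using fint by (simp add: D.prob_space)
  have g2: "(\<integral>y. (g y)\<^sup>2 \<partial>D) \<le> t"
  proof -
    have "(\<lambda>y. (g y)\<^sup>2) = (\<lambda>y. (f y)\<^sup>2 - 2 * \<mu> * f y + \<mu>\<^sup>2)"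
      unfolding g_def by (auto simp: power2_eq_square algebra_simps)
    then have "(\<integral>y. (g y)\<^sup>2 \<partial>D) = (\<integral>y. (f y)\<^sup>2 \<partial>D) - 2 * \<mu> * \<mu> + \<mu>\<^sup>2"
      using fint f2int by (simp add: \<mu>_def D.prob_space)
    also have "\<dots> \<le> t * \<mu> - \<mu>\<^sup>2" using f2le by (simp add: power2_eq_square)
    also have "\<dots> \<le> t" using mu0 mu1 t by (smt (verit) mult_left_le zero_le_power2)
    finally show ?thesis .
  qed
  have comp[measurable]: "(\<lambda>x. x i) \<in> measurable ?M D" if "i < n" for i
    using that by (auto intro: measurable_component_singleton)
  have E1: "(\<integral>x. h (x i) \<partial>?M) = (\<integral>y. h y \<partial>D)" if "i < n" "h \<in> borel_measurable D" for i and h :: "real \<Rightarrow> real"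
  proof -
    have "(\<integral>y. h y \<partial>D) = (\<integral>y. h y \<partial>(distr ?M D (\<lambda>x. x i)))"
      using distr_PiM_component[of "{..<n}" "\<lambda>_. D" i] that pD by simp
    also have "\<dots> = (\<integral>x. h (x i) \<partial>?M)"
      by (rule integral_distr) (use that in auto)
    finally show ?thesis by simp
  qed
  have E2: "(\<integral>x. g (x i) * g (x k) \<partial>?M) = 0" if "i < n" "k < n" "i \<noteq> k" for i k
  proof -
    define h where "h l y = (if l = i \<or> l = k then g y else 1)" for l y
    have "(\<integral>x. (\<Prod>l\<in>{..<n}. h l (x l)) \<partial>?M) = (\<Prod>l\<in>{..<n}. (\<integral>y. h l y \<partial>D))"
    proof (rule P.product_integral_prod)
      fix l assume "l \<in> {..<n}"
      show "integrable D (h l)"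
        by (cases "l = i \<or> l = k") (auto simp: h_def[abs_def] gint)
    qed simp
    also have "\<dots> = (\<Prod>l\<in>{i,k}. (\<integral>y. h l y \<partial>D))"
    proof -
      have one: "\<forall>l\<in>{..<n} - {i, k}. (\<integral>y. h l y \<partial>D) = 1"
      proof
        fix l assume "l \<in> {..<n} - {i, k}"
        then have "h l = (\<lambda>_. 1)" by (auto simp: h_def fun_eq_iff)
        then show "(\<integral>y. h l y \<partial>D) = 1" by (simp add: D.prob_space)
      qed
      show ?thesis
        using prod.mono_neutral_right[of "{..<n}" "{i,k}" "\<lambda>l. \<integral>y. h l y \<partial>D"] that one by auto
    qed
    also have "\<dots> = 0" using that by (simp add: h_def g0)
    finally have *: "(\<integral>x. (\<Prod>l\<in>{..<n}. h l (x l)) \<partial>?M) = 0" .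
    have "(\<Prod>l\<in>{..<n}. h l (x l)) = (\<Prod>l\<in>{i,k}. h l (x l))" for x
      by (rule prod.mono_neutral_right) (use that in \<open>auto simp: h_def\<close>)
    also have "(\<Prod>l\<in>{i,k}. h l (x l)) = g (x i) * g (x k)" for x using that by (simp add: h_def)
    finally show ?thesis using * by simp
  qed
  define X where "X x = (\<Sum>i<n. g (x i))" for x :: "nat \<Rightarrow> real"
  have Xmeas[measurable]: "X \<in> borel_measurable ?M" unfolding X_def by measurable
  have Xbd: "\<bar>X x\<bar> \<le> real n * (t + \<mu>)" for x
  proof -
    have "\<bar>X x\<bar> \<le> (\<Sum>i<n. \<bar>g (x i)\<bar>)" unfolding X_def by (rule sum_abs)
    also have "\<dots> \<le> (\<Sum>i<n. t + \<mu>)" by (rule sum_mono) (rule gbd)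
    finally show ?thesis by simp
  qed
  have gg_int: "integrable ?M (\<lambda>x. g (x i) * g (x k))" if "i < n" "k < n" for i k
    by (rule P.integrable_const_bound[where B="(t+\<mu>)*(t+\<mu>)"])
       (use that gbd t mu0 in \<open>auto simp: abs_mult intro!: always_eventually mult_mono\<close>)
  have X2: "(\<integral>x. (X x)\<^sup>2 \<partial>?M) \<le> real n * t"
  proof -
    have "(\<lambda>x. (X x)\<^sup>2) = (\<lambda>x. \<Sum>i<n. \<Sum>k<n. g (x i) * g (x k))"
      unfolding X_def by (simp add: power2_eq_square sum_product)
    then have "(\<integral>x. (X x)\<^sup>2 \<partial>?M) = (\<Sum>i<n. \<Sum>k<n. (\<integral>x. g (x i) * g (x k) \<partial>?M))"
    proof -
      have "(\<integral>x. (X x)\<^sup>2 \<partial>?M) = (\<Sum>i<n. (\<integral>x. (\<Sum>k<n. g (x i) * g (x k)) \<partial>?M))"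
        unfolding \<open>(\<lambda>x. (X x)\<^sup>2) = _\<close>
        by (rule Bochner_Integration.integral_sum) (use gg_int in auto)
      also have "\<dots> = (\<Sum>i<n. \<Sum>k<n. (\<integral>x. g (x i) * g (x k) \<partial>?M))"
        by (rule sum.cong[OF refl], rule Bochner_Integration.integral_sum) (use gg_int in auto)
      finally show ?thesis .
    qed
    also have "\<dots> = (\<Sum>i<n. (\<integral>x. g (x i) * g (x i) \<partial>?M))"
    proof (rule sum.cong[OF refl])
      fix i assume i: "i \<in> {..<n}"
      show "(\<Sum>k<n. (\<integral>x. g (x i) * g (x k) \<partial>?M)) = (\<integral>x. g (x i) * g (x i) \<partial>?M)"
        by (subst sum.remove[of _ i]) (use i E2 in auto)
    qed
    also have "\<dots> = (\<Sum>i<n. (\<integral>y. (g y)\<^sup>2 \<partial>D))"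
    proof (rule sum.cong[OF refl])
      fix i assume "i \<in> {..<n}"
      then have "(\<integral>x. (\<lambda>y. (g y)\<^sup>2) (x i) \<partial>?M) = (\<integral>y. (\<lambda>y. (g y)\<^sup>2) y \<partial>D)"
        by (intro E1) auto
      then show "(\<integral>x. g (x i) * g (x i) \<partial>?M) = (\<integral>y. (g y)\<^sup>2 \<partial>D)"
        by (simp add: power2_eq_square)
    qed
    also have "\<dots> \<le> (\<Sum>i<n. t)" by (rule sum_mono) (rule g2)
    finally show ?thesis by simp
  qed
  have EX: "(\<integral>x. X x \<partial>?M) = 0"
  proof -
    have "(\<integral>x. X x \<partial>?M) = (\<Sum>i<n. (\<integral>x. g (x i) \<partial>?M))"
      unfolding X_def by (rule Bochner_Integration.integral_sum)
        (auto intro!: P.integrable_const_bound[where B="t+\<mu>"] gbd)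
    also have "\<dots> = 0" using E1[of _ g] g0 by simp
    finally show ?thesis .
  qed
  have X2int: "integrable ?M (\<lambda>x. (X x)^2)"
    by (rule P.integrable_const_bound[where B="(real n * (t+\<mu>))^2"])
       (use Xbd t mu0 in \<open>auto simp: abs_le_square_iff[symmetric] intro!: always_eventually order_trans[OF Xbd]\<close>)
  have cheb: "P.prob {x\<in>space ?M. \<bar>X x - 0\<bar> \<ge> d} \<le> P.variance X / d\<^sup>2"
    using P.Chebyshev_inequality[OF Xmeas X2int d] EX by simp
  have "P.prob {x \<in> space ?M. real n + d \<le> (\<Sum>i<n. min (x i) t)} \<le> P.prob {x\<in>space ?M. \<bar>X x - 0\<bar> \<ge> d}"
  proof (rule P.finite_measure_mono)
    show "{x\<in>space ?M. \<bar>X x - 0\<bar> \<ge> d} \<in> P.events" by measurable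
    show "{x \<in> space ?M. real n + d \<le> (\<Sum>i<n. min (x i) t)} \<subseteq> {x\<in>space ?M. \<bar>X x - 0\<bar> \<ge> d}"
    proof safe
      fix x assume x: "x \<in> space ?M" "real n + d \<le> (\<Sum>i<n. min (x i) t)"
      have "(\<Sum>i<n. min (x i) t) \<le> (\<Sum>i<n. f (x i))" by (rule sum_mono) (simp add: f_def)
      also have "\<dots> = X x + real n * \<mu>" by (simp add: X_def g_def sum_subtractf)
      finally have "real n + d \<le> X x + real n * \<mu>" using x by simp
      moreover have "real n * \<mu> \<le> real n" using mu1 by (simp add: mult_left_le)
      ultimately show "d \<le> \<bar>X x - 0\<bar>" by simp
    qed
  qed
  also have "\<dots> \<le> P.variance X / d\<^sup>2" by (rule cheb)
  also have "P.variance X = (\<integral>x. (X x)\<^sup>2 \<partial>?M)" using EX by simp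
  finally show ?thesis using X2 d by (smt (verit) divide_right_mono zero_le_power2)
qed

lemma top_set:
  fixes x :: "nat \<Rightarrow> real"
  assumes "m \<le> n"
  shows "\<exists>S\<subseteq>{..<n}. card S = m \<and> (\<forall>i\<in>S. \<forall>k\<in>{..<n}-S. x k \<le> x i)"
  using assms
proof (induction m)
  case 0 then show ?case by auto
next
  case (Suc m)
  then obtain S where S: "S \<subseteq> {..<n}" "card S = m" "\<forall>i\<in>S. \<forall>k\<in>{..<n}-S. x k \<le> x i" by auto
  have fin: "finite ({..<n} - S)" by simp
  have ne: "{..<n} - S \<noteq> {}"
  proof
    assume "{..<n} - S = {}"
    then have "{..<n} \<subseteq> S" by auto
    then have "n \<le> card S" using card_mono[of S "{..<n}"] S(1) by (metis card_lessThan finite_subset finite_lessThan)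
    then show False using S(2) Suc.prems by simp
  qed
  obtain i0 where i0: "i0 \<in> {..<n} - S" "\<forall>k\<in>{..<n} - S. x k \<le> x i0"
  proof -
    obtain i0 where "i0 \<in> {..<n} - S" "Max (x ` ({..<n} - S)) = x i0"
      using obtains_MAX[OF fin ne] by blast
    moreover have "\<forall>k\<in>{..<n} - S. x k \<le> Max (x ` ({..<n} - S))"
      using fin by auto
    ultimately show ?thesis using that by auto
  qed
  show ?case
  proof (intro exI[of _ "insert i0 S"] conjI ballI)
    show "insert i0 S \<subseteq> {..<n}" using S i0 by auto
    show "card (insert i0 S) = Suc m" using S i0 finite_subset[OF S(1)] by auto
    fix i k assume "i \<in> insert i0 S" "k \<in> {..<n} - insert i0 S"
    then show "x k \<le> x i" using S i0 by auto
  qed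
qed


lemma Delta_le:
  assumes "S \<subseteq> {..<n}" "(\<Sum>i\<in>{..<n} - S. x i) \<le> real n"
  shows "Delta n x \<le> card S"
proof -
  have fin: "finite {card S |S. S \<subseteq> {..<n} \<and> (\<Sum>i\<in>{..<n} - S. x i) \<le> real n}"
    by (rule finite_subset[of _ "card ` Pow {..<n}"]) auto
  show ?thesis unfolding Delta_def by (rule Min_le[OF fin]) (use assms in auto)
qed

lemma Delta_le_n: "Delta n x \<le> n"
  using Delta_le[of "{..<n}" n x] by simp

lemma comb:
  fixes x :: "nat \<Rightarrow> real"
  assumes mn: "m < n" and D: "m < Delta n x"
  shows "\<exists>u. real n / real (n - m) \<le> u \<and> real n + real m * u \<le> (\<Sum>i<n. min (x i) u)"
proof -
  obtain S where S: "S \<subseteq> {..<n}" "card S = m" "\<forall>i\<in>S. \<forall>k\<in>{..<n}-S. x k \<le> x i"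
    using top_set[of m n x] mn by auto
  define R where "R = {..<n} - S"
  have finS: "finite S" using S(1) finite_subset by blast
  have cardR: "card R = n - m" unfolding R_def using S finS by (simp add: card_Diff_subset)
  have finR: "finite R" unfolding R_def by simp
  have neR: "R \<noteq> {}" using cardR mn by auto
  have big: "(\<Sum>i\<in>R. x i) > real n"
  proof (rule ccontr)
    assume "\<not> ?thesis"
    then have "Delta n x \<le> card S" using Delta_le[OF S(1)] unfolding R_def by simp
    then show False using D S(2) by simp
  qed
  define u where "u = Max (x ` R)"
  obtain k0 where k0: "k0 \<in> R" "u = x k0" using obtains_MAX[OF finR neR] u_def by metis
  have xR: "x k \<le> u" if "k \<in> R" for k using finR that unfolding u_def by auto
  have xS: "u \<le> x i" if "i \<in> S" for i using S(3) k0 that unfolding R_def by auto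
  have "(\<Sum>i\<in>R. x i) \<le> (\<Sum>i\<in>R. u)" by (rule sum_mono) (rule xR)
  also have "(\<Sum>i\<in>R. u) = real (n - m) * u" using cardR by simp
  finally have "real n < real (n - m) * u" using big by linarith
  then have u1: "real n / real (n - m) \<le> u" using mn by (simp add: divide_le_eq mult.commute)
  have "(\<Sum>i<n. min (x i) u) = (\<Sum>i\<in>R. min (x i) u) + (\<Sum>i\<in>S. min (x i) u)"
    unfolding R_def by (rule sum.subset_diff[OF S(1)]) simp
  also have "(\<Sum>i\<in>R. min (x i) u) = (\<Sum>i\<in>R. x i)" by (rule sum.cong) (auto dest: xR)
  also have "(\<Sum>i\<in>S. min (x i) u) = (\<Sum>i\<in>S. u)" by (rule sum.cong) (auto dest: xS)
  also have "\<dots> = real m * u" using S(2) by simp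
  finally have "real n + real m * u \<le> (\<Sum>i<n. min (x i) u)" using big by simp
  with u1 show ?thesis by blast
qed

lemma dyadic:
  fixes y :: real
  assumes "1 \<le> y"
  shows "\<exists>j::nat. 2^j \<le> y \<and> y \<le> 2^(Suc j)"
proof -
  obtain N :: nat where N: "y < 2^N" using real_arch_pow[of 2 y] by auto
  have "\<forall>y::real. 1 \<le> y \<longrightarrow> y < 2^N \<longrightarrow> (\<exists>j::nat. 2^j \<le> y \<and> y \<le> 2^(Suc j))"
  proof (induction N)
    case 0 then show ?case by auto
  next
    case (Suc N)
    show ?case
    proof (intro allI impI)
      fix y :: real assume y: "1 \<le> y" "y < 2^Suc N"
      show "\<exists>j::nat. 2^j \<le> y \<and> y \<le> 2^(Suc j)"
      proof (cases "y < 2^N")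
        case True then show ?thesis using Suc.IH y by blast
      next
        case False then show ?thesis using y by (intro exI[of _ N]) auto
      qed
    qed
  qed
  then show ?thesis using assms N by blast
qed


lemma final_arith:
  fixes n m v :: real
  assumes "1 \<le> m" "m < n" "v \<le> m + 1" "4 * n < v\<^sup>2" "0 < v"
  shows "4 * (n - m) / m\<^sup>2 \<le> 4 * n / v\<^sup>2"
proof -
  have v2: "v\<^sup>2 \<le> (m+1)\<^sup>2" using assms by (intro power_mono) auto
  have "n * (2*m+1) \<le> m * (m+1)\<^sup>2"
  proof -
    have "4 * n \<le> (m+1)\<^sup>2" using assms v2 by linarith
    then have "4 * n * (2*m+1) \<le> (m+1)\<^sup>2 * (2*m+1)" using assms by (intro mult_right_mono) auto
    also have "\<dots> \<le> (m+1)\<^sup>2 * (4*m)" using assms by (intro mult_left_mono) auto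
    finally show ?thesis by (simp add: mult.commute)
  qed
  then have "(n - m) * (m+1)\<^sup>2 \<le> n * m\<^sup>2" by (simp add: power2_eq_square algebra_simps)
  then have "(n - m) / m\<^sup>2 \<le> n / (m+1)\<^sup>2" using assms by (simp add: divide_le_eq le_divide_eq mult.commute)
  also have "\<dots> \<le> n / v\<^sup>2" using assms v2 by (intro divide_left_mono) auto
  finally have h: "(n - m) / m\<^sup>2 \<le> n / v\<^sup>2" .
  have "4 * (n - m) / m\<^sup>2 = 4 * ((n - m) / m\<^sup>2)" by simp
  also have "\<dots> \<le> 4 * (n / v\<^sup>2)" using mult_left_mono[OF h, of 4] by linarith
  finally show ?thesis by simp
qed

theorem mainTheorem13:
  fixes D :: "real measure" and n :: nat and v :: real
  assumes "prob_space D"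
    and "sets D = sets borel"
    and "AE x in D. x \<ge> 0"
    and "integrable D (\<lambda>x. x)"
    and "(\<integral>x. x \<partial>D) = 1"
    and "n \<ge> 1"
    and "v > 0"
  shows "measure (PiM {..<n} (\<lambda>_. D))
           {x \<in> space (PiM {..<n} (\<lambda>_. D)). real (Delta n x) \<ge> v}
         \<le> 2 / v + 4 * real n / v\<^sup>2"
proof -
  interpret D: prob_space D by (rule assms(1))
  interpret P: product_prob_space "\<lambda>_::nat. D" "{..<n}" by unfold_locales
  let ?M = "PiM {..<n} (\<lambda>_::nat. D)"
  let ?E = "{x \<in> space ?M. real (Delta n x) \<ge> v}"
  have nn: "0 \<le> 2 / v + 4 * real n / v\<^sup>2" using assms by simp
  show ?thesis
  proof (cases "v \<le> 2 \<or> v\<^sup>2 \<le> 4 * real n")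
    case True
    have "1 \<le> 2 / v + 4 * real n / v\<^sup>2"
    proof (cases "v \<le> 2")
      case True
      then have "1 \<le> 2 / v" using assms by (simp add: le_divide_eq)
      then show ?thesis using assms by (smt (verit) divide_nonneg_nonneg zero_le_power2 of_nat_0_le_iff)
    next
      case False
      then have "1 \<le> 4 * real n / v\<^sup>2" using True assms by (simp add: le_divide_eq)
      then show ?thesis using assms by (smt (verit) divide_nonneg_nonneg)
    qed
    then show ?thesis using P.prob_le_1[of ?E] by linarith
  next
    case False
    then have v2: "2 < v" and v4: "4 * real n < v\<^sup>2" by auto
    define m where "m = nat \<lceil>v\<rceil> - 1"
    have mv: "real m < v" "v \<le> real m + 1" "2 \<le> m" using v2 unfolding m_def
      by (auto simp: of_nat_diff) (linarith+)
    show ?thesis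
    proof (cases "n \<le> m")
      case True
      have "?E = {}"
      proof safe
        fix x assume "x \<in> space ?M" "v \<le> real (Delta n x)"
        moreover have "real (Delta n x) \<le> real m" using Delta_le_n[of n x] True by simp
        ultimately show "x \<in> {}" using mv by simp
      qed
      then have "P.prob ?E = 0" by (simp only:) simp
      then show ?thesis using nn by simp
    next
      case False
      then have mn: "m < n" by simp
      define a where "a = real n / real (n - m)"
      have a0: "0 < a" using mn assms unfolding a_def by auto
      define c where "c = 2 * real n / (a * (real m)\<^sup>2)"
      define A where "A j = {x \<in> space ?M. real n + real m * (a * 2^j) \<le> (\<Sum>i<n. min (x i) (a * 2^(Suc j)))}" for j :: nat
      have compB: "(\<lambda>x. x i) \<in> borel_measurable ?M" if "i < n" for i
        using measurable_component_singleton[of i "{..<n}" "\<lambda>_. D"] that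
          measurable_cong_sets[OF refl assms(2), of ?M] by auto
      have sumB: "(\<lambda>x. \<Sum>i<n. min (x i) c') \<in> borel_measurable ?M" for c' :: real
        by (intro borel_measurable_sum borel_measurable_min compB measurable_const) auto
      have Ameas: "A j \<in> P.events" for j unfolding A_def
        using sumB[of "a * 2^Suc j"] by measurable
      have Ale: "P.prob (A j) \<le> c * (1/2)^j" for j
      proof -
        have "P.prob (A j) \<le> real n * (a * 2^(Suc j)) / (real m * (a * 2^j))\<^sup>2"
          unfolding A_def
          by (rule cheb[OF assms(1-5)]) (use a0 mv in auto)
        also have "\<dots> = c * (1/2)^j" unfolding c_def using a0 mv
          by (simp add: power_one_over power2_eq_square field_simps)
        finally show ?thesis .
      qed
      have summ: "summable (\<lambda>j. c * (1/2::real)^j)" by simp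
      have summA: "summable (\<lambda>j. P.prob (A j))"
        by (rule summable_comparison_test'[OF summ, of 0]) (use Ale in auto)
      have sub: "?E \<subseteq> (\<Union>j. A j)"
      proof
        fix x assume x: "x \<in> ?E"
        then have "m < Delta n x" using mv by auto
        then obtain u where u: "a \<le> u" "real n + real m * u \<le> (\<Sum>i<n. min (x i) u)"
          using comb[OF mn] unfolding a_def by blast
        have "1 \<le> u / a" using u a0 by simp
        then obtain j where j: "2^j \<le> u / a" "u / a \<le> 2^(Suc j)" using dyadic by blast
        have j1: "a * 2^j \<le> u" using j a0 by (simp add: le_divide_eq mult.commute)
        have j2: "u \<le> a * 2^(Suc j)" using j a0 by (simp add: divide_le_eq mult.commute)
        have "real n + real m * (a * 2^j) \<le> real n + real m * u" using j1 by (simp add: mult_left_mono)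
        also have "\<dots> \<le> (\<Sum>i<n. min (x i) u)" by (rule u(2))
        also have "\<dots> \<le> (\<Sum>i<n. min (x i) (a * 2^(Suc j)))" by (rule sum_mono) (use j2 in auto)
        finally show "x \<in> (\<Union>j. A j)" using x unfolding A_def by blast
      qed
      have "P.prob (\<Union>j. A j) \<le> (\<Sum>j. P.prob (A j))"
        by (rule P.finite_measure_subadditive_countably) (use Ameas summA in auto)
      also have "\<dots> \<le> (\<Sum>j. c * (1/2)^j)" by (rule suminf_le) (use Ale summA summ in auto)
      also have "\<dots> = 2 * c" proof -
        have "(\<Sum>j. c * (1/2::real)^j) = c * (\<Sum>j. (1/2::real)^j)"
          by (rule suminf_mult) simp
        also have "(\<Sum>j. (1/2::real)^j) = 2" using suminf_geometric[of "1/2::real"] by simp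
        finally show ?thesis by simp
      qed
      also have "\<dots> = 4 * (real n - real m) / (real m)\<^sup>2"
        unfolding c_def a_def using mn mv by (simp add: of_nat_diff field_simps)
      also have "\<dots> \<le> 4 * real n / v\<^sup>2"
        by (rule final_arith) (use mv mn v4 v2 in auto)
      also have "\<dots> \<le> 2 / v + 4 * real n / v\<^sup>2" using v2 by simp
      finally have bound: "P.prob (\<Union>j. A j) \<le> 2 / v + 4 * real n / v\<^sup>2" .
      show ?thesis
      proof (cases "?E \<in> P.events")
        case True
        have "(\<Union>j. A j) \<in> P.events" using Ameas by auto
        then show ?thesis using P.finite_measure_mono[OF sub] bound by linarith
      next
        case False
        then show ?thesis using measure_notin_sets[OF False] nn by simp
      qed
    qed
  qed
qed

end
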